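(* Let $K$ be a field, $0\le g\le[n/2]$ and $\lambda$ a partition of $n-2g$ with at most $m$ nonzero parts. Then $z_{g,\lambda}\mathbb B_n=z_{g,\lambda}K\mathfrak S_n$.
   Context: Setup: $m,n$ positive integers, $i'=2m+1-i$; $V$ a $K$-space with basis $v_1,\dots,v_{2m}$, skew form $\langle v_i,v_j\rangle=\langle v_{i'},v_{j'}\rangle=0$, $\langle v_i,v_{j'}\rangle=\delta_{ij}=-\langle v_{j'},v_i\rangle$ ($1\le i,j\le m$); $v_i^*=v_{i'}$ ($i\le m$), $v_i^*=-v_{i'}$ ($i>m$); $\alpha=\sum_{k=1}^{2m}v_k\otimes v_k^*$. $\mathbb B_n=\mathbb B_n(-2m)$ is the Brauer algebra with generators $s_i,e_i$; $K\mathfrak S_n$ is the subalgebra generated by the $s_i$; it acts on the right of $V^{\otimes n}$ by $(v_{i_1}\otimes\cdots\otimes v_{i_n})s_j=-(\cdots\otimes v_{i_{j+1}}\otimes v_{i_j}\otimes\cdots)$, $(v_{i_1}\otimes\cdots\otimes v_{i_n})e_j=-v_{i_1}\otimes\cdots\otimes v_{i_{j-1}}\otimes\alpha\otimes v_{i_{j+2}}\otimes\cdots$. Definition of $z_{g,\lambda}$ ($k=n-2g$): $v_\lambda=v_1^{\otimes\lambda_1}\otimes\cdots\otimes v_m^{\otimes\lambda_m}$; $\lambda'$ conjugate; $\mathfrak t^\lambda,\mathfrak t_\lambda$ the $\lambda$-tableaux filled with $1,\dots,k$ along rows, resp. down columns; $w_\lambda\in\mathfrak S_k$ with $\mathfrak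 t^\lambda w_\lambda=\mathfrak t_\lambda$ (right action on entries); $x_{\lambda'}=\sum_{w\in\mathfrak S_{\lambda'}}w$, $\mathfrak S_{\lambda'}$ the Young subgroup stabilizing $\{1,\dots,\lambda'_1\},\{\lambda'_1+1,\dots,\lambda'_1+\lambda'_2\},\dots$; $z_{g,\lambda}=\alpha^{\otimes g}\otimes(v_\lambda w_\lambda x_{\lambda'})$ with $\mathfrak S_k$ acting on $V^{\otimes k}$ via $\mathbb B_k$. *)

theory Defs
  imports "HOL-Combinatorics.Permutations"
begin

(* Tensors in V^{\<otimes>n}: coefficient functions on words (i_1,...,i_n), i_p \<in> {1..2m};
   the word u corresponds to the basis tensor v_{u!0} \<otimes> ... \<otimes> v_{u!(n-1)}. *)
type_synonym 'k tensor = "nat list \<Rightarrow> 'k"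

definition words :: "nat \<Rightarrow> nat \<Rightarrow> nat list set" where
  "words m n = {u. length u = n \<and> set u \<subseteq> {1..2*m}}"

(* eps m a b = <v_a, v_b>; it is also the coefficient of v_a \<otimes> v_b in alpha *)
definition eps :: "nat \<Rightarrow> nat \<Rightarrow> nat \<Rightarrow> 'k::field" where
  "eps m a b = (if 1 \<le> a \<and> a \<le> 2*m \<and> b = 2*m+1-a then (if a \<le> m then 1 else -1) else 0)"

definition basis_t :: "nat list \<Rightarrow> 'k::field tensor" where
  "basis_t x = (\<lambda>u. if u = x then 1 else 0)"

definition swap_at :: "nat \<Rightarrow> nat list \<Rightarrow> nat list" where
  "swap_at j u = u[j-1 := u!j, j := u!(j-1)]"

definition act_s :: "nat \<Rightarrow> nat \<Rightarrow> nat \<Rightarrow> 'k::field tensor \<Rightarrow> 'k tensor" where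
  "act_s m n j T = (\<lambda>u. if u \<in> words m n then - T (swap_at j u) else 0)"

(* right action of e_j (1 \<le> j < n):
   (v_w) e_j = - <v_{w_j},v_{w_{j+1}}> v_{w_1}..v_{w_{j-1}} \<otimes> alpha \<otimes> v_{w_{j+2}}.. *)
definition act_e :: "nat \<Rightarrow> nat \<Rightarrow> nat \<Rightarrow> 'k::field tensor \<Rightarrow> 'k tensor" where
  "act_e m n j T = (\<lambda>u. if u \<in> words m n then
      - eps m (u!(j-1)) (u!j) *
        (\<Sum>a\<in>{1..2*m}. \<Sum>b\<in>{1..2*m}. eps m a b * T (u[j-1 := a, j := b]))
    else 0)"

(* right action of a permutation p of {1..k} on V^{\<otimes>k} through the Brauer algebra:
   (v_x) p = sign(p) * (tensor in which the factor at position b is moved to position p b) *)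
definition tperm :: "(nat \<Rightarrow> nat) \<Rightarrow> 'k::field tensor \<Rightarrow> 'k tensor" where
  "tperm p T = (\<lambda>u. of_int (sign p) * T (map (\<lambda>b. u ! (p b - 1)) [1..<length u + 1]))"

(* z B_n : the K-span of { z b | b \<in> B_n }, i.e. the smallest subspace containing z stable
   under the actions of the generators s_j, e_j *)
inductive_set brauer_span :: "nat \<Rightarrow> nat \<Rightarrow> 'k::field tensor \<Rightarrow> 'k tensor set"
  for m n z where
  base: "z \<in> brauer_span m n z"
| add: "x \<in> brauer_span m n z \<Longrightarrow> y \<in> brauer_span m n z \<Longrightarrow> (\<lambda>u. x u + y u) \<in> brauer_span m n z"
| smult: "x \<in> brauer_span m n z \<Longrightarrow> (\<lambda>u. c * x u) \<in> brauer_span m n z"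
| gen_s: "x \<in> brauer_span m n z \<Longrightarrow> 1 \<le> j \<Longrightarrow> j < n \<Longrightarrow> act_s m n j x \<in> brauer_span m n z"
| gen_e: "x \<in> brauer_span m n z \<Longrightarrow> 1 \<le> j \<Longrightarrow> j < n \<Longrightarrow> act_e m n j x \<in> brauer_span m n z"

(* z K S_n : same, with generators s_j only *)
inductive_set sym_span :: "nat \<Rightarrow> nat \<Rightarrow> 'k::field tensor \<Rightarrow> 'k tensor set"
  for m n z where
  base: "z \<in> sym_span m n z"
| add: "x \<in> sym_span m n z \<Longrightarrow> y \<in> sym_span m n z \<Longrightarrow> (\<lambda>u. x u + y u) \<in> sym_span m n z"
| smult: "x \<in> sym_span m n z \<Longrightarrow> (\<lambda>u. c * x u) \<in> sym_span m n z"
| gen_s: "x \<in> sym_span m n z \<Longrightarrow> 1 \<le> j \<Longrightarrow> j < n \<Longrightarrow> act_s m n j x \<in> sym_span m n z"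

definition is_partition :: "nat list \<Rightarrow> nat \<Rightarrow> bool" where
  "is_partition lam k \<longleftrightarrow> sorted_wrt (\<ge>) lam \<and> 0 \<notin> set lam \<and> sum_list lam = k"

definition conj_part :: "nat list \<Rightarrow> nat list" where
  "conj_part lam = map (\<lambda>c. length (filter (\<lambda>x. c < x) lam)) [0..<(if lam = [] then 0 else hd lam)]"

(* boxes (r,c), 0-based row r and column c *)
definition boxes :: "nat list \<Rightarrow> (nat \<times> nat) set" where
  "boxes lam = {(r,c). r < length lam \<and> c < lam ! r}"

(* t^lambda: filled 1..k along rows;  t_lambda: filled 1..k down columns *)
definition t_row :: "nat list \<Rightarrow> nat \<times> nat \<Rightarrow> nat" where
  "t_row lam b = sum_list (take (fst b) lam) + snd b + 1"

definition t_col :: "nat list \<Rightarrow> nat \<times> nat \<Rightarrow> nat" where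
  "t_col lam b = sum_list (take (snd b) (conj_part lam)) + fst b + 1"

(* w_lambda with t^lambda w_lambda = t_lambda (right action on entries) *)
definition w_lam :: "nat list \<Rightarrow> nat \<Rightarrow> nat" where
  "w_lam lam a = (if \<exists>b\<in>boxes lam. t_row lam b = a
                  then t_col lam (THE b. b \<in> boxes lam \<and> t_row lam b = a) else a)"

definition young_block :: "nat list \<Rightarrow> nat \<Rightarrow> nat set" where
  "young_block mu i = {sum_list (take i mu) + 1 .. sum_list (take (Suc i) mu)}"

definition young_sub :: "nat list \<Rightarrow> (nat \<Rightarrow> nat) set" where
  "young_sub mu = {p. p permutes {1..sum_list mu} \<and> (\<forall>i<length mu. p ` young_block mu i = young_block mu i)}"

definition v_word :: "nat list \<Rightarrow> nat list" where
  "v_word lam = concat (map (\<lambda>i. replicate (lam ! i) (Suc i)) [0..<length lam])"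

(* v_lambda w_lambda x_{lambda'} *)
definition y_lam :: "nat list \<Rightarrow> 'k::field tensor" where
  "y_lam lam = (\<lambda>u. \<Sum>w\<in>young_sub (conj_part lam). tperm w (tperm (w_lam lam) (basis_t (v_word lam))) u)"

(* z_{g,lambda} = alpha^{\<otimes>g} \<otimes> (v_lambda w_lambda x_{lambda'}) in V^{\<otimes>n} *)
definition z_gl :: "nat \<Rightarrow> nat \<Rightarrow> nat \<Rightarrow> nat list \<Rightarrow> 'k::field tensor" where
  "z_gl m n g lam = (\<lambda>u. if u \<in> words m n then
      (\<Prod>t<g. eps m (u!(2*t)) (u!(2*t+1))) * y_lam lam (drop (2*g) u) else 0)"

end

theory Submission
  imports Defs
begin


lemma eps_antisym: "eps m a b = - (eps m b a :: 'k::field)"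
  unfolding eps_def by (cases "a \<le> m"; cases "b \<le> m") auto

lemma eps_nz: "eps m c d \<noteq> (0::'k::field) \<Longrightarrow> m < c \<or> m < d"
  unfolding eps_def by (auto split: if_splits)

lemma eps_zero: "c \<noteq> 2*m+1-d \<Longrightarrow> eps m c d = (0::'k::field)"
  unfolding eps_def by auto

lemma eps_val: "d \<in> {1..2*m} \<Longrightarrow> eps m (2*m+1-d) d = (if d \<le> m then -1 else (1::'k::field))"
  unfolding eps_def by auto

lemma eps_sum:
  assumes "d \<in> {1..2*m}" "x \<in> {1..2*m}"
  shows "(\<Sum>c\<in>{1..2*m}. eps m c d * eps m c x) = (if d = x then 1 else (0::'k::field))"
proof -
  have "(\<Sum>c\<in>{1..2*m}. eps m c d * (eps m c x::'k)) =
        (\<Sum>c\<in>{1..2*m}. if c = 2*m+1-d then eps m c d * eps m c x else 0)"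
    by (rule sum.cong) (simp_all add: eps_zero)
  also have "\<dots> = eps m (2*m+1-d) d * eps m (2*m+1-d) x"
    using assms by (subst sum.delta) auto
  also have "\<dots> = (if d = x then 1 else 0)"
  proof (cases "d = x")
    case True
    then show ?thesis using eps_val[OF assms(1), where 'k='k] by simp
  next
    case False
    then have "2*m+1-d \<noteq> 2*m+1-x" using assms by auto
    then show ?thesis using False eps_zero[of "2*m+1-d" m x, where 'k='k] by simp
  qed
  finally show ?thesis .
qed

lemma eps_sq_sum:
  "(\<Sum>c\<in>{1..2*m}. \<Sum>d\<in>{1..2*m}. eps m c d * eps m c d) = (of_nat (2*m) :: 'k::field)"
proof -
  have "(\<Sum>c\<in>{1..2*m}. \<Sum>d\<in>{1..2*m}. eps m c d * (eps m c d::'k)) =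
        (\<Sum>d\<in>{1..2*m}. \<Sum>c\<in>{1..2*m}. eps m c d * eps m c d)"
    by (rule sum.swap)
  also have "\<dots> = (\<Sum>d\<in>{1..2*m}. (1::'k))"
  proof (intro sum.cong refl)
    fix d assume "d \<in> {1..2*m}"
    then show "(\<Sum>c\<in>{1..2*m}. eps m c d * eps m c d) = (1::'k)" using eps_sum[of d m d, where 'k='k] by simp
  qed
  finally show ?thesis by simp
qed

lemma words_upd: "u \<in> words m n \<Longrightarrow> i < n \<Longrightarrow> c \<in> {1..2*m} \<Longrightarrow> u[i:=c] \<in> words m n"
  unfolding words_def using set_update_subset_insert[of u i c] by auto

lemma words_nth: "u \<in> words m n \<Longrightarrow> i < n \<Longrightarrow> u!i \<in> {1..2*m}"
  unfolding words_def by (auto dest!: nth_mem)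

lemma words_len: "u \<in> words m n \<Longrightarrow> length u = n"
  unfolding words_def by auto

definition Ct :: "nat \<Rightarrow> nat \<Rightarrow> nat \<Rightarrow> nat \<Rightarrow> 'k::field tensor \<Rightarrow> 'k tensor" where
  "Ct m n a b T = (\<lambda>u. if u \<in> words m n then
      - eps m (u!a) (u!b) * (\<Sum>c\<in>{1..2*m}. \<Sum>d\<in>{1..2*m}. eps m c d * T (u[a := c, b := d]))
    else 0)"

definition Tr :: "nat \<Rightarrow> nat \<Rightarrow> nat \<Rightarrow> nat \<Rightarrow> 'k::field tensor \<Rightarrow> 'k tensor" where
  "Tr m n p q T = (\<lambda>u. if u \<in> words m n then - T (u[p := u!q, q := u!p]) else 0)"

lemma act_e_Ct: "act_e m n j T = Ct m n (j-1) j T"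
  unfolding act_e_def Ct_def by simp

lemma act_s_Tr: "act_s m n j T = Tr m n (j-1) j T"
  unfolding act_s_def Tr_def swap_at_def by simp

lemma Tr_sym: "p \<noteq> q \<Longrightarrow> Tr m n p q T = Tr m n q p T"
  unfolding Tr_def by (intro ext) (simp add: list_update_swap[of p q])

lemma Ct_sym: "a \<noteq> b \<Longrightarrow> Ct m n a b T = Ct m n b a (T::'k::field tensor)"
proof -
  assume ab: "a \<noteq> b"
  have "(\<Sum>c\<in>{1..2*m}. \<Sum>d\<in>{1..2*m}. eps m c d * T (u[a := c, b := d])) =
        - (\<Sum>c\<in>{1..2*m}. \<Sum>d\<in>{1..2*m}. eps m c d * T (u[b := c, a := d]))" for u
  proof -
    have "(\<Sum>c\<in>{1..2*m}. \<Sum>d\<in>{1..2*m}. eps m c d * T (u[b := c, a := d])) =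
          (\<Sum>d\<in>{1..2*m}. \<Sum>c\<in>{1..2*m}. eps m c d * T (u[b := c, a := d]))"
      by (rule sum.swap)
    also have "\<dots> = (\<Sum>d\<in>{1..2*m}. \<Sum>c\<in>{1..2*m}. - (eps m d c * T (u[a := d, b := c])))"
    proof (intro sum.cong refl)
      fix d c
      show "eps m c d * T (u[b := c, a := d]) = - (eps m d c * T (u[a := d, b := c]))"
        using ab eps_antisym[of m c d, where 'k='k] list_update_swap[of b a u c d] by simp
    qed
    finally show ?thesis by (simp add: sum_negf)
  qed
  note S = this
  show ?thesis
  proof
    fix u
    show "Ct m n a b T u = Ct m n b a T u"
      unfolding Ct_def using S[of u] eps_antisym[of m "u!a" "u!b", where 'k='k] by simp
  qed
qed

lemma Tr_step:
  assumes "p < q" "Suc q < n"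
  shows "Tr m n p (Suc q) T = act_s m n (Suc q) (Tr m n p q (act_s m n (Suc q) T))"
proof
  fix u
  show "Tr m n p (Suc q) T u = act_s m n (Suc q) (Tr m n p q (act_s m n (Suc q) T)) u"
  proof (cases "u \<in> words m n")
    case True
    have l: "length u = n" using True words_len by auto
    let ?s = "swap_at (Suc q) u"
    have sw: "?s \<in> words m n" unfolding swap_at_def
      using True assms l by (auto intro!: words_upd words_nth)
    let ?t = "?s[p := ?s!q, q := ?s!p]"
    have tw: "?t \<in> words m n"
      using sw assms l by (auto intro!: words_upd words_nth)
    have eq: "swap_at (Suc q) ?t = u[p := u!Suc q, Suc q := u!p]"
      using assms l unfolding swap_at_def
      by (intro nth_equalityI) (auto simp: nth_list_update)
    show ?thesis using True sw tw eq unfolding Tr_def act_s_def by simp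
  next
    case False
    then show ?thesis unfolding Tr_def act_s_def by simp
  qed
qed

lemma Tr_closed_aux:
  "x \<in> sym_span m n z \<Longrightarrow> Suc (p + d) < n \<Longrightarrow> Tr m n p (Suc (p + d)) x \<in> sym_span m n z"
proof (induction d arbitrary: x)
  case 0
  then show ?case using sym_span.gen_s[OF 0(1), of "Suc p"] by (simp add: act_s_Tr)
next
  case (Suc d)
  have "Tr m n p (Suc (p + Suc d)) x =
        act_s m n (Suc (Suc (p+d))) (Tr m n p (Suc (p+d)) (act_s m n (Suc (Suc (p+d))) x))"
    using Tr_step[of p "Suc (p+d)" n m x] Suc.prems by simp
  moreover have "act_s m n (Suc (Suc (p+d))) x \<in> sym_span m n z"
    using sym_span.gen_s[OF Suc.prems(1)] Suc.prems by simp
  ultimately show ?case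
    using Suc.IH[OF \<open>act_s m n (Suc (Suc (p+d))) x \<in> sym_span m n z\<close>] Suc.prems
      sym_span.gen_s[of _ m n z "Suc (Suc (p+d))"] by simp
qed

lemma Tr_closed:
  assumes "x \<in> sym_span m n z" "p \<noteq> q" "p < n" "q < n"
  shows "Tr m n p q x \<in> sym_span m n z"
proof (cases "p < q")
  case True
  then obtain d where "q = Suc (p + d)" using less_imp_Suc_add by blast
  then show ?thesis using Tr_closed_aux[OF assms(1)] assms by simp
next
  case False
  then have "q < p" using assms by simp
  then obtain d where "p = Suc (q + d)" using less_imp_Suc_add by blast
  then show ?thesis using Tr_closed_aux[OF assms(1), of q d] assms Tr_sym by metis
qed


definition tau :: "nat \<Rightarrow> nat \<Rightarrow> nat" where
  "tau j i = (if i = j-1 then j else if i = j then j-1 else i)"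

lemma tau_lt: "1 \<le> j \<Longrightarrow> j < n \<Longrightarrow> a < n \<Longrightarrow> tau j a < n"
  unfolding tau_def by auto

lemma tau_inj: "1 \<le> j \<Longrightarrow> a \<noteq> b \<Longrightarrow> tau j a \<noteq> tau j b"
  unfolding tau_def by auto

lemma swap_nth_tau: "1 \<le> j \<Longrightarrow> j < length u \<Longrightarrow> a < length u \<Longrightarrow> swap_at j u ! tau j a = u ! a"
  unfolding swap_at_def tau_def by (auto simp: nth_list_update)

lemma swap_len[simp]: "length (swap_at j u) = length u"
  unfolding swap_at_def by simp

lemma swap_upd_tau:
  assumes "1 \<le> j" "j < length u" "a < length u" "b < length u" "a \<noteq> b"
  shows "swap_at j (u[a := c, b := d]) = (swap_at j u)[tau j a := c, tau j b := d]"
proof (rule nth_equalityI)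
  show "length (swap_at j (u[a := c, b := d])) = length ((swap_at j u)[tau j a := c, tau j b := d])"
    unfolding swap_at_def by simp
  fix i assume "i < length (swap_at j (u[a := c, b := d]))"
  then have i: "i < length u" unfolding swap_at_def by simp
  have L: "swap_at j v ! i = v ! (tau j i)" if "length v = length u" for v
    using that i assms(1,2) unfolding swap_at_def tau_def by (simp add: nth_list_update)
  have ta: "a = tau j i \<longleftrightarrow> tau j a = i" "b = tau j i \<longleftrightarrow> tau j b = i"
    using assms(1) unfolding tau_def by auto
  have tt: "tau j (tau j x) = x" for x using assms(1) unfolding tau_def by auto
  have tl: "tau j x < length u" if "x < length u" for x using that assms(1,2) unfolding tau_def by auto
  show "swap_at j (u[a := c, b := d]) ! i = (swap_at j u)[tau j a := c, tau j b := d] ! i"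
    using L[of "u[a := c, b := d]"] L[of u] i assms tl[of a] tl[of b] tt[of a] tt[of b]
    by (auto simp: nth_list_update ta tt)
qed

lemma Ct_act_s:
  assumes "1 \<le> j" "j < n" "a < n" "b < n" "a \<noteq> b"
  shows "Ct m n a b (act_s m n j x) = act_s m n j (Ct m n (tau j a) (tau j b) (x::'k::field tensor))"
proof
  fix u
  show "Ct m n a b (act_s m n j x) u = act_s m n j (Ct m n (tau j a) (tau j b) x) u"
  proof (cases "u \<in> words m n")
    case True
    have l: "length u = n" using True words_len by auto
    have sw: "swap_at j u \<in> words m n" unfolding swap_at_def
      using True assms l by (auto intro!: words_upd words_nth)
    have in1: "u[a := c, b := d] \<in> words m n" if "c \<in> {1..2*m}" "d \<in> {1..2*m}" for c d
      using that True assms l by (auto intro!: words_upd)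
    have "(\<Sum>c\<in>{1..2*m}. \<Sum>d\<in>{1..2*m}. eps m c d * act_s m n j x (u[a := c, b := d])) =
          (\<Sum>c\<in>{1..2*m}. \<Sum>d\<in>{1..2*m}. - (eps m c d * x ((swap_at j u)[tau j a := c, tau j b := d])))"
      using in1 assms l by (intro sum.cong refl) (simp add: act_s_def swap_upd_tau)
    moreover have "act_s m n j (Ct m n (tau j a) (tau j b) x) u = - Ct m n (tau j a) (tau j b) x (swap_at j u)"
      using True by (simp add: act_s_def)
    moreover have "Ct m n (tau j a) (tau j b) x (swap_at j u) = - eps m (u!a) (u!b) *
       (\<Sum>c\<in>{1..2*m}. \<Sum>d\<in>{1..2*m}. eps m c d * x ((swap_at j u)[tau j a := c, tau j b := d]))"
      using sw assms l by (simp add: Ct_def swap_nth_tau)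
    ultimately show ?thesis using True
      unfolding Ct_def[of m n a b] by (simp add: sum_negf)
  next
    case False
    then show ?thesis unfolding Ct_def act_s_def by simp
  qed
qed



definition BX :: "nat list \<Rightarrow> (nat \<times> nat) set" where
  "BX ns = {(r,c). r < length ns \<and> c < ns!r}"

definition fr :: "nat list \<Rightarrow> nat \<times> nat \<Rightarrow> nat" where
  "fr ns b = sum_list (take (fst b) ns) + snd b + 1"

lemma sum_take_mono: "i \<le> j \<Longrightarrow> sum_list (take i (xs::nat list)) \<le> sum_list (take j xs)"
proof -
  assume "i \<le> j"
  then obtain d where "j = i + d" using le_Suc_ex by blast
  then show ?thesis by (simp add: take_add)
qed

lemma sum_take_Suc: "r < length xs \<Longrightarrow> sum_list (take (Suc r) (xs::nat list)) = sum_list (take r xs) + xs!r"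
  by (simp add: take_Suc_conv_app_nth)

lemma sum_take_le: "sum_list (take r (xs::nat list)) \<le> sum_list xs"
  using sum_take_mono[of r "length xs" xs] by (cases "r \<le> length xs") auto

lemma card_BX: "card (BX ns) = sum_list ns"
proof -
  have "BX ns = (SIGMA r:{..<length ns}. {..<ns!r})" unfolding BX_def by auto
  then have "card (BX ns) = (\<Sum>r<length ns. ns!r)" by simp
  also have "\<dots> = sum_list ns" by (simp add: sum_list_sum_nth atLeast0LessThan)
  finally show ?thesis .
qed

lemma finite_BX: "finite (BX ns)"
proof -
  have "BX ns = (SIGMA r:{..<length ns}. {..<ns!r})" unfolding BX_def by auto
  then show ?thesis by simp
qed

lemma fr_bij: "bij_betw (fr ns) (BX ns) {1..sum_list ns}"
proof -
  have inj: "inj_on (fr ns) (BX ns)"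
  proof (rule inj_onI)
    fix x y assume x: "x \<in> BX ns" and y: "y \<in> BX ns" and e: "fr ns x = fr ns y"
    obtain r c where xr: "x = (r,c)" by (cases x)
    obtain r' c' where yr: "y = (r',c')" by (cases y)
    have a: "r < length ns" "c < ns!r" "r' < length ns" "c' < ns!r'"
      using x y xr yr unfolding BX_def by auto
    have e': "sum_list (take r ns) + c = sum_list (take r' ns) + c'" using e xr yr unfolding fr_def by simp
    have "r = r'"
    proof (rule ccontr)
      assume "r \<noteq> r'"
      then consider "r < r'" | "r' < r" by linarith
      then show False
      proof cases
        case 1
        then have "sum_list (take (Suc r) ns) \<le> sum_list (take r' ns)" by (intro sum_take_mono) auto
        then show False using sum_take_Suc[of r ns] a e' by linarith
      next
        case 2
        then have "sum_list (take (Suc r') ns) \<le> sum_list (take r ns)" by (intro sum_take_mono) auto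
        then show False using sum_take_Suc[of r' ns] a e' by linarith
      qed
    qed
    then show "x = y" using xr yr e' by simp
  qed
  have sub: "fr ns ` BX ns \<subseteq> {1..sum_list ns}"
  proof
    fix v assume "v \<in> fr ns ` BX ns"
    then obtain r c where "(r,c) \<in> BX ns" "v = fr ns (r,c)" by auto
    then have "r < length ns" "c < ns!r" "v = sum_list (take r ns) + c + 1" unfolding BX_def fr_def by auto
    then show "v \<in> {1..sum_list ns}"
      using sum_take_Suc[of r ns] sum_take_le[of "Suc r" ns] by auto
  qed
  have "card (fr ns ` BX ns) = card {1..sum_list ns}"
    using card_image[OF inj] card_BX by simp
  then have "fr ns ` BX ns = {1..sum_list ns}"
    using card_subset_eq[OF _ sub] by simp
  then show ?thesis using inj unfolding bij_betw_def by simp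
qed

lemma filter_len_sorted:
  "sorted_wrt (\<ge>) (xs::nat list) \<Longrightarrow> r < length (filter (\<lambda>x. c < x) xs) \<longleftrightarrow> r < length xs \<and> c < xs!r"
proof (induction xs arbitrary: r)
  case Nil
  then show ?case by simp
next
  case (Cons x xs)
  show ?case
  proof (cases "c < x")
    case True
    then show ?thesis using Cons by (cases r) auto
  next
    case False
    then have "filter (\<lambda>x. c < x) xs = []" using Cons.prems by (auto simp: filter_empty_conv)
    moreover have "\<not> (r < length (x#xs) \<and> c < (x#xs)!r)"
      using False Cons.prems by (cases r) (auto, metis nth_mem order.strict_trans2)
    ultimately show ?thesis using False by simp
  qed
qed

lemma boxes_BX: "boxes lam = BX lam"
  unfolding boxes_def BX_def by simp

lemma t_row_fr: "t_row lam b = fr lam b"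
  unfolding t_row_def fr_def by simp

lemma t_col_fr: "t_col lam b = fr (conj_part lam) (prod.swap b)"
  unfolding t_col_def fr_def by (cases b) simp

lemma boxes_conj:
  assumes "sorted_wrt (\<ge>) lam"
  shows "boxes lam = prod.swap ` BX (conj_part lam)"
proof -
  have "(r,c) \<in> boxes lam \<longleftrightarrow> (c,r) \<in> BX (conj_part lam)" for r c
  proof
    assume h: "(r,c) \<in> boxes lam"
    then have a: "r < length lam" "c < lam!r" unfolding boxes_def by auto
    have "lam!r \<le> lam!0"
      using assms a sorted_wrt_nth_less[of "(\<ge>)" lam 0 r] by (cases r) auto
    then have "c < hd lam" using a by (cases lam) auto
    moreover have "lam \<noteq> []" using a by auto
    ultimately show "(c,r) \<in> BX (conj_part lam)"
      using a filter_len_sorted[OF assms, of r c] unfolding BX_def conj_part_def by auto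
  next
    assume "(c,r) \<in> BX (conj_part lam)"
    then show "(r,c) \<in> boxes lam"
      using filter_len_sorted[OF assms, of r c] unfolding BX_def conj_part_def boxes_def
      by (auto split: if_splits)
  qed
  then show ?thesis by force
qed

lemma t_col_bij:
  assumes "sorted_wrt (\<ge>) lam"
  shows "bij_betw (t_col lam) (boxes lam) {1..sum_list (conj_part lam)}"
proof -
  have "bij_betw prod.swap (boxes lam) (BX (conj_part lam))"
    unfolding boxes_conj[OF assms] by (rule bij_betw_imageI) (auto simp: image_image)
  from bij_betw_trans[OF this fr_bij]
  show ?thesis by (simp add: comp_def t_col_fr[abs_def])
qed

lemma sum_conj:
  assumes "sorted_wrt (\<ge>) lam"
  shows "sum_list (conj_part lam) = sum_list lam"
proof -
  have "card (boxes lam) = sum_list lam" using card_BX boxes_BX by metis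
  moreover have "card (boxes lam) = card {1..sum_list (conj_part lam)}"
    using bij_betw_same_card[OF t_col_bij[OF assms]] .
  ultimately show ?thesis by simp
qed

lemma w_lam_permutes:
  assumes "sorted_wrt (\<ge>) lam"
  shows "w_lam lam permutes {1..sum_list lam}"
proof -
  have tr: "bij_betw (t_row lam) (boxes lam) {1..sum_list lam}"
    using fr_bij[of lam] unfolding boxes_BX t_row_fr[abs_def] by simp
  have tc: "bij_betw (t_col lam) (boxes lam) {1..sum_list lam}"
    using t_col_bij[OF assms] sum_conj[OF assms] by simp
  have b: "bij_betw (t_col lam \<circ> the_inv_into (boxes lam) (t_row lam)) {1..sum_list lam} {1..sum_list lam}"
    by (rule bij_betw_trans[OF bij_betw_the_inv_into[OF tr] tc])
  have img: "t_row lam ` boxes lam = {1..sum_list lam}" using tr unfolding bij_betw_def by simp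
  have eq: "w_lam lam a = (t_col lam \<circ> the_inv_into (boxes lam) (t_row lam)) a" if "a \<in> {1..sum_list lam}" for a
  proof -
    have "\<exists>b\<in>boxes lam. t_row lam b = a" using that img by (metis imageE)
    then show ?thesis unfolding w_lam_def the_inv_into_def by simp
  qed
  have "bij_betw (w_lam lam) {1..sum_list lam} {1..sum_list lam}"
    using bij_betw_cong[of "{1..sum_list lam}" "w_lam lam"] eq b by blast
  moreover have "w_lam lam a = a" if "a \<notin> {1..sum_list lam}" for a
  proof -
    have "\<not> (\<exists>b\<in>boxes lam. t_row lam b = a)" using that img by blast
    then show ?thesis unfolding w_lam_def by simp
  qed
  ultimately show ?thesis by (rule bij_imp_permutes)
qed

definition good :: "nat \<Rightarrow> nat \<Rightarrow> nat list \<Rightarrow> bool" where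
  "good m k v \<longleftrightarrow> length v = k \<and> (\<forall>x\<in>set v. x \<le> m)"

lemma tperm_supp:
  assumes p: "p permutes {1..k}" and T: "\<And>v. T v \<noteq> 0 \<Longrightarrow> good m k v"
    and nz: "tperm p T u \<noteq> (0::'k::field)"
  shows "good m k u"
proof -
  let ?v = "map (\<lambda>b. u ! (p b - 1)) [1..<length u + 1]"
  have "T ?v \<noteq> 0" using nz unfolding tperm_def by auto
  then have g: "good m k ?v" by (rule T)
  then have l: "length u = k" unfolding good_def by (simp del: upt_Suc)
  have "x \<le> m" if "x \<in> set u" for x
  proof -
    obtain i where i: "i < length u" "u!i = x" using \<open>x \<in> set u\<close> by (metis in_set_conv_nth)
    obtain b where b: "p b = Suc i" using p unfolding permutes_def by metis
    have "b \<in> {1..k}"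
    proof (rule ccontr)
      assume "b \<notin> {1..k}"
      then have "p b = b" using p unfolding permutes_def by blast
      then show False using b i l \<open>b \<notin> {1..k}\<close> by auto
    qed
    then have "?v ! (b - 1) = u ! i" using b l by (auto simp del: upt_Suc)
    moreover have "?v ! (b-1) \<in> set ?v" using \<open>b \<in> {1..k}\<close> l by (intro nth_mem) (auto simp del: upt_Suc)
    ultimately show ?thesis using g i unfolding good_def by auto
  qed
  then show ?thesis using l unfolding good_def by auto
qed

lemma v_word_good: "length lam \<le> m \<Longrightarrow> good m (sum_list lam) (v_word lam)"
proof -
  assume "length lam \<le> m"
  have "length (v_word lam) = sum_list lam"
    unfolding v_word_def by (simp add: length_concat comp_def map_nth)
  moreover have "\<forall>x\<in>set (v_word lam). x \<le> m"
    using \<open>length lam \<le> m\<close> unfolding v_word_def by auto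
  ultimately show ?thesis unfolding good_def by simp
qed

lemma y_lam_supp:
  assumes "sorted_wrt (\<ge>) lam" "length lam \<le> m" "y_lam lam v \<noteq> (0::'k::field)"
  shows "\<forall>x\<in>set v. x \<le> m"
proof -
  let ?k = "sum_list lam"
  have b: "good m ?k w" if "(basis_t (v_word lam) :: 'k tensor) w \<noteq> 0" for w
    using that v_word_good[OF assms(2)] unfolding basis_t_def by (auto split: if_splits)
  have t1: "good m ?k w" if "tperm (w_lam lam) (basis_t (v_word lam) :: 'k tensor) w \<noteq> 0" for w
    using tperm_supp[OF w_lam_permutes[OF assms(1)] b that] .
  obtain w where w: "w \<in> young_sub (conj_part lam)"
    "tperm w (tperm (w_lam lam) (basis_t (v_word lam) :: 'k tensor)) v \<noteq> 0"
    using assms(3) unfolding y_lam_def by (meson sum.neutral)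
  have "w permutes {1..?k}" using w(1) sum_conj[OF assms(1)] unfolding young_sub_def by simp
  from tperm_supp[OF this t1 w(2)] show ?thesis unfolding good_def by simp
qed



definition zz :: "nat \<Rightarrow> nat \<Rightarrow> nat \<Rightarrow> 'k::field tensor \<Rightarrow> 'k tensor" where
  "zz m n g Y = (\<lambda>u. if u \<in> words m n then
      (\<Prod>t<g. eps m (u!(2*t)) (u!(2*t+1))) * Y (drop (2*g) u) else 0)"

lemma z_gl_zz: "z_gl m n g lam = zz m n g (y_lam lam)"
  unfolding z_gl_def zz_def by simp

lemma Ct_zz_y:
  assumes supp: "\<And>v. Y v \<noteq> 0 \<Longrightarrow> \<forall>x\<in>set v. x \<le> m"
    and ab: "2*g \<le> a" "2*g \<le> b" "a \<noteq> b" "a < n" "b < n"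
  shows "Ct m n a b (zz m n g Y) = (\<lambda>u. (0::'k::field))"
proof
  fix u
  show "Ct m n a b (zz m n g Y) u = 0"
  proof (cases "u \<in> words m n")
    case True
    have l: "length u = n" using True words_len by auto
    have H: "eps m c d * zz m n g Y (u[a := c, b := d]) = 0" if cd: "c \<in> {1..2*m}" "d \<in> {1..2*m}" for c d
    proof (cases "eps m c d = (0::'k)")
      case False
      then have "m < c \<or> m < d" by (rule eps_nz)
      moreover have "c \<in> set (drop (2*g) (u[a := c, b := d]))"
      proof -
        have "drop (2*g) (u[a := c, b := d]) ! (a - 2*g) = c" using ab l by simp
        moreover have "a - 2*g < length (drop (2*g) (u[a := c, b := d]))" using ab l by simp
        ultimately show ?thesis by (metis nth_mem)
      qed
      moreover have "d \<in> set (drop (2*g) (u[a := c, b := d]))"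
      proof -
        have "drop (2*g) (u[a := c, b := d]) ! (b - 2*g) = d" using ab l by simp
        moreover have "b - 2*g < length (drop (2*g) (u[a := c, b := d]))" using ab l by simp
        ultimately show ?thesis by (metis nth_mem)
      qed
      ultimately have "Y (drop (2*g) (u[a := c, b := d])) = 0" using supp by force
      then show ?thesis unfolding zz_def by simp
    next
      case True
      then show ?thesis by simp
    qed
    have "(\<Sum>c\<in>{1..2*m}. \<Sum>d\<in>{1..2*m}. eps m c d * zz m n g Y (u[a := c, b := d])) = 0"
      by (intro sum.neutral ballI) (simp add: H)
    then show ?thesis using True unfolding Ct_def by simp
  next
    case False
    then show ?thesis unfolding Ct_def by simp
  qed
qed

locale pairpos =
  fixes m n g a :: nat and Y :: "'k::field tensor"
  assumes a2g: "a < 2*g" and gn: "2*g \<le> n"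
begin

definition t0 where "t0 = a div 2"
definition a' where "a' = (if even a then a+1 else a-1)"
definition sg :: 'k where "sg = (if even a then 1 else -1)"
definition R :: "'k tensor" where
  "R v = (\<Prod>t\<in>{..<g}-{t0}. eps m (v!(2*t)) (v!(2*t+1))) * Y (drop (2*g) v)"

lemma a'_lt: "a' < 2*g" using a2g unfolding a'_def by auto

lemma a'_ne: "a' \<noteq> a" unfolding a'_def by (cases a) auto

lemma t0_lt: "t0 < g" using a2g unfolding t0_def by auto

lemma F1: "(\<Prod>t<g. eps m (v!(2*t)) (v!(2*t+1))) * Y (drop (2*g) v) = sg * eps m (v!a) (v!a') * R v"
proof -
  have p1: "(\<Prod>t<g. eps m (v!(2*t)) (v!(2*t+1))) =
        eps m (v!(2*t0)) (v!(2*t0+1)) * (\<Prod>t\<in>{..<g}-{t0}. eps m (v!(2*t)) (v!(2*t+1)))"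
    using t0_lt by (subst prod.remove[of _ t0]) auto
  have p2: "eps m (v!(2*t0)) (v!(2*t0+1)) = sg * (eps m (v!a) (v!a') :: 'k)"
  proof (cases "even a")
    case True
    then have "2*t0 = a" "2*t0+1 = a'" unfolding t0_def a'_def by auto
    then show ?thesis using True unfolding sg_def by simp
  next
    case False
    then have "2*t0 = a'" "2*t0+1 = a" unfolding t0_def a'_def by presburger+
    then show ?thesis using False unfolding sg_def by (simp add: eps_antisym[of m "v!a'"])
  qed
  show ?thesis unfolding R_def p1 p2 by (simp add: ac_simps)
qed

lemma F2a: "R (v[a := c]) = R v"
proof -
  have i: "2*t \<noteq> a" "2*t+1 \<noteq> a" if "t \<noteq> t0" for t
    using that unfolding t0_def by presburger+
  have H: "v[a:=c] ! (2*t) = v ! (2*t)" "v[a:=c] ! (2*t+1) = v ! (2*t+1)" if "t \<noteq> t0" for t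
    using i[OF that] by (simp_all add: nth_list_update_neq)
  have "(\<Prod>t\<in>{..<g}-{t0}. eps m (v[a:=c]!(2*t)) (v[a:=c]!(2*t+1))) =
        (\<Prod>t\<in>{..<g}-{t0}. eps m (v!(2*t)) (v!(2*t+1)) :: 'k)"
  proof (rule prod.cong)
    fix t assume "t \<in> {..<g}-{t0}"
    then have "t \<noteq> t0" by simp
    then show "eps m (v[a:=c]!(2*t)) (v[a:=c]!(2*t+1)) = eps m (v!(2*t)) (v!(2*t+1))" using H[OF \<open>t \<noteq> t0\<close>] by simp
  qed simp
  then show ?thesis unfolding R_def using a2g by simp
qed

lemma F2b: "R (v[a' := c]) = R v"
proof -
  have i: "2*t \<noteq> a'" "2*t+1 \<noteq> a'" if "t \<noteq> t0" for t
    using that unfolding t0_def a'_def by presburger+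
  have H: "v[a':=c] ! (2*t) = v ! (2*t)" "v[a':=c] ! (2*t+1) = v ! (2*t+1)" if "t \<noteq> t0" for t
    using i[OF that] by (simp_all add: nth_list_update_neq)
  have "(\<Prod>t\<in>{..<g}-{t0}. eps m (v[a':=c]!(2*t)) (v[a':=c]!(2*t+1))) =
        (\<Prod>t\<in>{..<g}-{t0}. eps m (v!(2*t)) (v!(2*t+1)) :: 'k)"
  proof (rule prod.cong)
    fix t assume "t \<in> {..<g}-{t0}"
    then have "t \<noteq> t0" by simp
    then show "eps m (v[a':=c]!(2*t)) (v[a':=c]!(2*t+1)) = eps m (v!(2*t)) (v!(2*t+1))" using H[OF \<open>t \<noteq> t0\<close>] by simp
  qed simp
  then show ?thesis unfolding R_def using a'_lt by simp
qed

lemma zz_form: "zz m n g Y v = (if v \<in> words m n then sg * eps m (v!a) (v!a') * R v else 0)"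
  unfolding zz_def using F1 by simp

lemma Ct_pair: "Ct m n a a' (zz m n g Y) = (\<lambda>u. - of_nat (2*m) * zz m n g Y u)"
proof
  fix u
  show "Ct m n a a' (zz m n g Y) u = - of_nat (2*m) * zz m n g Y u"
  proof (cases "u \<in> words m n")
    case True
    have l: "length u = n" using True words_len by auto
    have an: "a < n" "a' < n" using a2g a'_lt gn by auto
    have "eps m c d * zz m n g Y (u[a := c, a' := d]) = sg * R u * (eps m c d * eps m c d)"
      if "c \<in> {1..2*m}" "d \<in> {1..2*m}" for c d
    proof -
      have w: "u[a := c, a' := d] \<in> words m n" using that True an by (auto intro!: words_upd)
      have "R (u[a := c, a' := d]) = R u" using F2a F2b by simp
      then show ?thesis using w l an a'_ne unfolding zz_form by (simp add: nth_list_update)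
    qed
    then have "(\<Sum>c\<in>{1..2*m}. \<Sum>d\<in>{1..2*m}. eps m c d * zz m n g Y (u[a := c, a' := d])) =
               (\<Sum>c\<in>{1..2*m}. \<Sum>d\<in>{1..2*m}. sg * R u * (eps m c d * eps m c d))"
      by (intro sum.cong refl) auto
    also have "\<dots> = sg * R u * of_nat (2*m)" using eps_sq_sum[of m, where 'k='k] by (simp add: sum_distrib_left[symmetric])
    finally show ?thesis using True unfolding Ct_def zz_form[of u] by (simp add: algebra_simps)
  next
    case False
    then show ?thesis unfolding Ct_def zz_def by simp
  qed
qed

lemma Ct_leg:
  assumes b: "b < n" "b \<noteq> a" "b \<noteq> a'"
  shows "Ct m n a b (zz m n g Y) = Tr m n a' b (zz m n g Y)"
proof
  fix u
  show "Ct m n a b (zz m n g Y) u = Tr m n a' b (zz m n g Y) u"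
  proof (cases "u \<in> words m n")
    case True
    have l: "length u = n" using True words_len by auto
    have an: "a < n" "a' < n" using a2g a'_lt gn by auto
    have x: "u!a' \<in> {1..2*m}" using True an words_nth by auto
    have "eps m c d * zz m n g Y (u[a := c, b := d]) = sg * (eps m c d * eps m c (u!a')) * R (u[b := d])"
      if "c \<in> {1..2*m}" "d \<in> {1..2*m}" for c d
    proof -
      have w: "u[a := c, b := d] \<in> words m n" using that True an b by (auto intro!: words_upd)
      have "R (u[a := c, b := d]) = R (u[b := d])" using F2a[of "u[b := d]" c] b list_update_swap[of a b u c d] by simp
      then show ?thesis using w l an b a'_ne unfolding zz_form by (simp add: nth_list_update)
    qed
    then have "(\<Sum>c\<in>{1..2*m}. \<Sum>d\<in>{1..2*m}. eps m c d * zz m n g Y (u[a := c, b := d])) =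
               (\<Sum>c\<in>{1..2*m}. \<Sum>d\<in>{1..2*m}. sg * (eps m c d * eps m c (u!a')) * R (u[b := d]))"
      by (intro sum.cong refl) auto
    also have "\<dots> = (\<Sum>d\<in>{1..2*m}. \<Sum>c\<in>{1..2*m}. sg * (eps m c d * eps m c (u!a')) * R (u[b := d]))"
      by (rule sum.swap)
    also have "\<dots> = (\<Sum>d\<in>{1..2*m}. sg * (\<Sum>c\<in>{1..2*m}. eps m c d * eps m c (u!a')) * R (u[b := d]))"
      by (simp add: sum_distrib_left sum_distrib_right)
    also have "\<dots> = (\<Sum>d\<in>{1..2*m}. if d = u!a' then sg * R (u[b := d]) else 0)"
    proof (intro sum.cong refl)
      fix d assume d: "d \<in> {1..2*m}"
      show "sg * (\<Sum>c\<in>{1..2*m}. eps m c d * eps m c (u!a')) * R (u[b := d]) =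
            (if d = u!a' then sg * R (u[b := d]) else 0)"
        using eps_sum[OF d x, where 'k='k] by simp
    qed
    also have "\<dots> = sg * R (u[b := u!a'])" using x by simp
    finally have s: "(\<Sum>c\<in>{1..2*m}. \<Sum>d\<in>{1..2*m}. eps m c d * zz m n g Y (u[a := c, b := d])) =
        sg * R (u[b := u!a'])" .
    have w2: "u[a' := u!b, b := u!a'] \<in> words m n" using True an b by (auto intro!: words_upd words_nth)
    have "R (u[a' := u!b, b := u!a']) = R (u[b := u!a'])" using F2b[of "u[b := u!a']" "u!b"] b list_update_swap[of a' b u "u!b" "u!a'"] by simp
    then have "Tr m n a' b (zz m n g Y) u = - (sg * eps m (u!a) (u!b) * R (u[b := u!a']))"
      using True w2 l an b a'_ne unfolding Tr_def zz_form[of "u[a' := u!b, b := u!a']"]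
      by (simp add: nth_list_update)
    then show ?thesis using True s unfolding Ct_def by (simp add: algebra_simps)
  next
    case False
    then show ?thesis unfolding Ct_def Tr_def by simp
  qed
qed

end



lemma Ct_base:
  assumes gn: "2*g \<le> n" and supp: "\<And>v. Y v \<noteq> 0 \<Longrightarrow> \<forall>x\<in>set v. x \<le> m"
    and ab: "a < n" "b < n" "a \<noteq> b"
  shows "Ct m n a b (zz m n g Y) \<in> sym_span m n (zz m n g (Y::'k::field tensor))"
proof -
  let ?z = "zz m n g Y"
  have leg: "Ct m n a b ?z \<in> sym_span m n ?z" if a2: "a < 2*g" "b < n" "a \<noteq> b" for a b
  proof -
    interpret pairpos m n g a Y using a2 gn by unfold_locales auto
    show ?thesis
    proof (cases "b = a'")
      case True
      then have "Ct m n a b ?z = (\<lambda>u. (- of_nat (2*m)) * ?z u)" using Ct_pair by simp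
      then show ?thesis by (metis sym_span.base sym_span.smult)
    next
      case False
      then have "Ct m n a b ?z = Tr m n a' b ?z" using Ct_leg a2 by simp
      moreover have "a' < n" using a'_lt gn by simp
      ultimately show ?thesis using Tr_closed[OF sym_span.base, of a' b n m ?z] False a2 by simp
    qed
  qed
  show ?thesis
  proof (cases "a < 2*g")
    case True
    then show ?thesis using leg ab by simp
  next
    case False
    show ?thesis
    proof (cases "b < 2*g")
      case True
      then show ?thesis using leg[of b a] ab Ct_sym[of a b m n ?z] by simp
    next
      case False': False
      have "Ct m n a b ?z = (\<lambda>u. 0 * ?z u)" using Ct_zz_y[where Y=Y and g=g and a=a and b=b and n=n and m=m] supp False False' ab by simp
      then show ?thesis using sym_span.smult[OF sym_span.base, of 0] by simp
    qed
  qed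
qed

lemma Ct_add: "Ct m n a b (\<lambda>u. x u + y u) = (\<lambda>u. Ct m n a b x u + Ct m n a b y u)"
  unfolding Ct_def by (intro ext) (simp add: sum.distrib distrib_left algebra_simps)

lemma Ct_smult: "Ct m n a b (\<lambda>u. c * x u) = (\<lambda>u. c * Ct m n a b x u)"
  unfolding Ct_def by (intro ext) (simp add: sum_distrib_left algebra_simps)

lemma sym_Ct_closed:
  assumes base: "\<And>a b. a < n \<Longrightarrow> b < n \<Longrightarrow> a \<noteq> b \<Longrightarrow> Ct m n a b z \<in> sym_span m n z"
  shows "x \<in> sym_span m n z \<Longrightarrow> \<forall>a b. a < n \<longrightarrow> b < n \<longrightarrow> a \<noteq> b \<longrightarrow> Ct m n a b x \<in> sym_span m n (z::'k::field tensor)"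
proof (induction rule: sym_span.induct)
  case base
  then show ?case using assms by blast
next
  case (add x y)
  then show ?case by (auto simp: Ct_add intro: sym_span.add)
next
  case (smult x c)
  then show ?case by (auto simp: Ct_smult intro: sym_span.smult)
next
  case (gen_s x j)
  show ?case
  proof (intro allI impI)
    fix a b assume ab: "a < n" "b < n" "a \<noteq> b"
    have "Ct m n (tau j a) (tau j b) x \<in> sym_span m n z"
      using gen_s.IH tau_lt[OF _ _ ab(1)] tau_lt[OF _ _ ab(2)] tau_inj[OF _ ab(3)] gen_s.hyps by simp
    then show "Ct m n a b (act_s m n j x) \<in> sym_span m n z"
      using Ct_act_s[of j n a b m x] ab gen_s.hyps sym_span.gen_s[of _ m n z j] by simp
  qed
qed

lemma sym_sub_brauer: "x \<in> sym_span m n z \<Longrightarrow> x \<in> brauer_span m n z"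
  by (induction rule: sym_span.induct) (auto intro: brauer_span.intros)

theorem lemma4p7:
  fixes m n g :: nat and lam :: "nat list"
  assumes "0 < m" and "0 < n"
    and "g \<le> n div 2"
    and "is_partition lam (n - 2*g)"
    and "length lam \<le> m"
  shows "brauer_span m n (z_gl m n g lam :: 'k::field tensor) = sym_span m n (z_gl m n g lam)"
proof -
  let ?z = "z_gl m n g lam :: 'k tensor"
  have gn: "2*g \<le> n" using assms(3) by linarith
  have sorted: "sorted_wrt (\<ge>) lam" using assms(4) unfolding is_partition_def by simp
  have supp: "\<And>v. y_lam lam v \<noteq> (0::'k) \<Longrightarrow> \<forall>x\<in>set v. x \<le> m"
    using y_lam_supp[OF sorted assms(5)] by blast
  have cl: "\<forall>a b. a < n \<longrightarrow> b < n \<longrightarrow> a \<noteq> b \<longrightarrow> Ct m n a b x \<in> sym_span m n ?z"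
    if "x \<in> sym_span m n ?z" for x
    using sym_Ct_closed[OF _ that] Ct_base[OF gn supp] unfolding z_gl_zz by blast
  have "x \<in> sym_span m n ?z" if "x \<in> brauer_span m n ?z" for x
    using that
  proof (induction rule: brauer_span.induct)
    case base then show ?case by (rule sym_span.base)
  next
    case (add x y) then show ?case using sym_span.add by blast
  next
    case (smult x c) then show ?case using sym_span.smult by blast
  next
    case (gen_s x j) then show ?case using sym_span.gen_s by blast
  next
    case (gen_e x j)
    then show ?case using cl[OF gen_e.IH] by (simp add: act_e_Ct)
  qed
  then show ?thesis using sym_sub_brauer by blast
qed

end
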